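(* Let $A\in\mathrm{Sect}(\pi/2-)$ on a complex Banach space. Then for every $\alpha>0$, \[\alpha\int_{\mathbb{R}}\|(\alpha+i\beta+A)^{-2}\|\,d\beta\le4(2\pi+3\log2)M_A(\log M_A+1).\]
   Context: $\Sigma_\theta=\{z\ne0:|\arg z|<\theta\}$, $\Sigma_0=(0,\infty)$. A densely defined operator $A$ is sectorial of angle $\theta\in[0,\pi/2)$ if $\sigma(A)\subset\overline{\Sigma_\theta}$ and for each $\theta'\in(\theta,\pi]$ there is $C_{\theta'}$ with $\|z(z+A)^{-1}\|\le C_{\theta'}$ for $z\in\Sigma_{\pi-\theta'}$; $\mathrm{Sect}(\pi/2-)$ is the union of these classes over $\theta\in[0,\pi/2)$. For such $A$, $M_A:=\sup_{\Re z>0}\|z(z+A)^{-1}\|<\infty$ (the sectoriality constant). *)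

theory Defs
  imports "HOL-Analysis.Analysis"
begin

text \<open>A complex Banach space is modelled as a real Banach space 'a together with
 a real-linear map J (multiplication by i) with J (J x) = - x such that the induced
 complex scalar multiplication is absolutely homogeneous.\<close>

definition cscale :: "('a::real_normed_vector \<Rightarrow> 'a) \<Rightarrow> complex \<Rightarrow> 'a \<Rightarrow> 'a" where
  "cscale J c x = Re c *\<^sub>R x + Im c *\<^sub>R J x"

definition complex_structure :: "('a::real_normed_vector \<Rightarrow> 'a) \<Rightarrow> bool" where
  "complex_structure J \<longleftrightarrow> linear J \<and> (\<forall>x. J (J x) = - x)
      \<and> (\<forall>c x. norm (cscale J c x) = cmod c * norm x)"

text \<open>A (possibly unbounded) complex-linear operator A is given by its graph G.\<close>

definition lin_op :: "('a::real_normed_vector \<Rightarrow> 'a) \<Rightarrow> ('a \<times> 'a) set \<Rightarrow> bool" where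
  "lin_op J G \<longleftrightarrow> (0, 0) \<in> G
     \<and> (\<forall>x y u v. (x, y) \<in> G \<and> (u, v) \<in> G \<longrightarrow> (x + u, y + v) \<in> G)
     \<and> (\<forall>c x y. (x, y) \<in> G \<longrightarrow> (cscale J c x, cscale J c y) \<in> G)
     \<and> (\<forall>x y y'. (x, y) \<in> G \<and> (x, y') \<in> G \<longrightarrow> y = y')"

definition densely_defined :: "('a::real_normed_vector \<times> 'a) set \<Rightarrow> bool" where
  "densely_defined G \<longleftrightarrow> closure (Domain G) = UNIV"

definition shift_op :: "('a::real_normed_vector \<Rightarrow> 'a) \<Rightarrow> complex \<Rightarrow> ('a \<times> 'a) set \<Rightarrow> ('a \<times> 'a) set" where
  "shift_op J z G = {(x, cscale J z x + y) | x y. (x, y) \<in> G}"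

definition is_bounded_inverse :: "('a::real_normed_vector \<Rightarrow>\<^sub>L 'a) \<Rightarrow> ('a \<times> 'a) set \<Rightarrow> bool" where
  "is_bounded_inverse R H \<longleftrightarrow> (\<forall>y. (blinfun_apply R y, y) \<in> H) \<and> (\<forall>x y. (x, y) \<in> H \<longrightarrow> blinfun_apply R y = x)"

definition shift_invertible :: "('a::real_normed_vector \<Rightarrow> 'a) \<Rightarrow> ('a \<times> 'a) set \<Rightarrow> complex \<Rightarrow> bool" where
  "shift_invertible J G z \<longleftrightarrow> (\<exists>R. is_bounded_inverse R (shift_op J z G))"

definition res :: "('a::real_normed_vector \<Rightarrow> 'a) \<Rightarrow> ('a \<times> 'a) set \<Rightarrow> complex \<Rightarrow> ('a \<Rightarrow>\<^sub>L 'a)" where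
  "res J G z = (THE R. is_bounded_inverse R (shift_op J z G))"

text \<open>Spectrum: lambda \<in> \<sigma>(A) iff lambda - A = -((-lambda) + A) has no bounded inverse.\<close>
definition op_spectrum :: "('a::real_normed_vector \<Rightarrow> 'a) \<Rightarrow> ('a \<times> 'a) set \<Rightarrow> complex set" where
  "op_spectrum J G = {w. \<not> shift_invertible J G (- w)}"

definition sector :: "real \<Rightarrow> complex set" where
  "sector \<theta> = (if \<theta> = 0 then {z. Im z = 0 \<and> Re z > 0} else {z. z \<noteq> 0 \<and> \<bar>Arg z\<bar> < \<theta>})"

definition sectorial_of_angle :: "('a::real_normed_vector \<Rightarrow> 'a) \<Rightarrow> ('a \<times> 'a) set \<Rightarrow> real \<Rightarrow> bool" where
  "sectorial_of_angle J G \<theta> \<longleftrightarrow> 0 \<le> \<theta> \<and> \<theta> < pi / 2 \<and> lin_op J G \<and> densely_defined G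
     \<and> op_spectrum J G \<subseteq> closure (sector \<theta>)
     \<and> (\<forall>\<theta>'. \<theta> < \<theta>' \<and> \<theta>' \<le> pi \<longrightarrow>
          (\<exists>C. \<forall>z \<in> sector (pi - \<theta>'). shift_invertible J G z \<and> cmod z * norm (res J G z) \<le> C))"

definition sect_half_pi :: "('a::real_normed_vector \<Rightarrow> 'a) \<Rightarrow> ('a \<times> 'a) set \<Rightarrow> bool" where
  "sect_half_pi J G \<longleftrightarrow> (\<exists>\<theta>. sectorial_of_angle J G \<theta>)"

definition sect_const :: "('a::real_normed_vector \<Rightarrow> 'a) \<Rightarrow> ('a \<times> 'a) set \<Rightarrow> real" where
  "sect_const J G = (SUP z \<in> {z. Re z > 0}. cmod z * norm (res J G z))"

end

theory Submission
  imports Defs "HOL-Complex_Analysis.Complex_Analysis"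
begin

lemma cs_J:
  assumes "complex_structure J"
  shows "linear J" "J (J x) = - x" "norm (cscale J c x) = cmod c * norm x"
  using assms unfolding complex_structure_def by auto

lemma cs_add_vec:
  assumes "complex_structure J"
  shows "cscale J c (x + y) = cscale J c x + cscale J c y"
  using linear_add[OF cs_J(1)[OF assms]] unfolding cscale_def by (simp add: algebra_simps)

lemma cs_scaleR_vec:
  assumes "complex_structure J"
  shows "cscale J c (r *\<^sub>R x) = r *\<^sub>R cscale J c x"
  using linear_scale[OF cs_J(1)[OF assms]] unfolding cscale_def by (simp add: algebra_simps)

lemma cs_add_sc: "cscale J (c + d) x = cscale J c x + cscale J d x"
  unfolding cscale_def by (simp add: algebra_simps)

lemma cs_minus_sc: "cscale J (- c) x = - cscale J c x"
  unfolding cscale_def by (simp add: algebra_simps)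

lemma cs_diff_sc: "cscale J (c - d) x = cscale J c x - cscale J d x"
  unfolding cscale_def by (simp add: algebra_simps)

lemma cs_one: "cscale J 1 x = x"
  unfolding cscale_def by simp

lemma cs_zero: "cscale J 0 x = 0"
  unfolding cscale_def by simp

lemma cs_mult:
  assumes "complex_structure J"
  shows "cscale J (c * d) x = cscale J c (cscale J d x)"
proof -
  have l: "linear J" and jj: "J (J x) = - x" using cs_J[OF assms] by auto
  have "cscale J c (cscale J d x) = Re c *\<^sub>R (Re d *\<^sub>R x + Im d *\<^sub>R J x)
        + Im c *\<^sub>R (Re d *\<^sub>R J x + Im d *\<^sub>R J (J x))"
    unfolding cscale_def using linear_add[OF l] linear_scale[OF l] by simp
  also have "\<dots> = cscale J (c * d) x"
    unfolding cscale_def jj by (simp add: algebra_simps)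
  finally show ?thesis by simp
qed

lemma cs_comm:
  assumes "complex_structure J"
  shows "cscale J c (cscale J d x) = cscale J d (cscale J c x)"
  by (metis assms cs_mult mult.commute)

lemma cs_zero_vec:
  assumes "complex_structure J"
  shows "cscale J c 0 = 0"
  using cs_J(3)[OF assms, of c 0] by simp

lemma cs_minus_vec:
  assumes "complex_structure J"
  shows "cscale J c (- x) = - cscale J c x"
  using cs_scaleR_vec[OF assms, of c "-1" x] by simp

lemma cs_diff_vec:
  assumes "complex_structure J"
  shows "cscale J c (x - y) = cscale J c x - cscale J c y"
  using cs_add_vec[OF assms, of c x "-y"] cs_minus_vec[OF assms] by simp

lemma norm_J:
  assumes "complex_structure J"
  shows "norm (J x) = norm x"
  using cs_J(3)[OF assms, of \<i> x] unfolding cscale_def by simp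

lemma cs_real: "cscale J (complex_of_real r) x = r *\<^sub>R x"
  unfolding cscale_def by simp

lemma bi_unique:
  assumes "is_bounded_inverse R H" "is_bounded_inverse R' H"
  shows "R = R'"
proof (rule blinfun_eqI)
  fix y
  from assms(1) have "(blinfun_apply R y, y) \<in> H" unfolding is_bounded_inverse_def by auto
  with assms(2) show "blinfun_apply R y = blinfun_apply R' y" unfolding is_bounded_inverse_def by metis
qed

lemma res_inv:
  assumes "shift_invertible J G z"
  shows "is_bounded_inverse (res J G z) (shift_op J z G)"
proof -
  obtain R where R: "is_bounded_inverse R (shift_op J z G)"
    using assms unfolding shift_invertible_def by auto
  show ?thesis unfolding res_def
    by (rule theI[of _ R]) (use R bi_unique in auto)
qed

lemma shift_mem: "(x, y) \<in> shift_op J z G \<longleftrightarrow> (\<exists>a. (x, a) \<in> G \<and> y = cscale J z x + a)"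
  unfolding shift_op_def by auto

lemma res_mem:
  assumes "shift_invertible J G z"
  shows "\<exists>a. (res J G z y, a) \<in> G \<and> y = cscale J z (res J G z y) + a"
  using res_inv[OF assms] unfolding is_bounded_inverse_def shift_mem by auto

lemma res_eq:
  assumes "shift_invertible J G z" "(x, a) \<in> G"
  shows "res J G z (cscale J z x + a) = x"
  using res_inv[OF assms(1)] assms(2) unfolding is_bounded_inverse_def shift_mem by auto

lemma res_cscale:
  assumes cs: "complex_structure J" and lin: "lin_op J G" and inv: "shift_invertible J G z"
  shows "res J G z (cscale J c y) = cscale J c (res J G z y)"
proof -
  obtain a where a: "(res J G z y, a) \<in> G" "y = cscale J z (res J G z y) + a"
    using res_mem[OF inv] by blast
  have G2: "(cscale J c (res J G z y), cscale J c a) \<in> G" using lin a(1) unfolding lin_op_def by blast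
  have "cscale J c y = cscale J z (cscale J c (res J G z y)) + cscale J c a"
    using a(2) cs_add_vec[OF cs] cs_comm[OF cs] by metis
  then show ?thesis using res_eq[OF inv G2] by simp
qed

lemma res_identity:
  assumes cs: "complex_structure J" and lin: "lin_op J G"
    and iw: "shift_invertible J G w" and iv: "shift_invertible J G v"
  shows "res J G w y - res J G v y = cscale J (v - w) (res J G w (res J G v y))"
proof -
  define u where "u = res J G v y"
  obtain a where a: "(u, a) \<in> G" "y = cscale J v u + a"
    using res_mem[OF iv] unfolding u_def by blast
  have "res J G w (cscale J w u + a) = u" by (rule res_eq[OF iw a(1)])
  moreover have "cscale J w u + a = y + cscale J (w - v) u"
    using a(2) by (simp add: cs_diff_sc)
  ultimately have "res J G w y + res J G w (cscale J (w - v) u) = u"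
    by (simp add: blinfun.add_right)
  then have "res J G w y + cscale J (w - v) (res J G w u) = u"
    using res_cscale[OF cs lin iw] by simp
  then have "res J G w y - u = - cscale J (w - v) (res J G w u)"
    by (simp add: algebra_simps)
  also have "\<dots> = cscale J (v - w) (res J G w u)"
    by (metis cs_minus_sc minus_diff_eq)
  finally show ?thesis unfolding u_def .
qed

lemma sector_half: "sector (pi / 2) = {z. Re z > 0}"
  unfolding sector_def using Arg_Re_pos by auto

lemma sect_bound:
  assumes "sect_half_pi J G"
  obtains C where "\<And>z. Re z > 0 \<Longrightarrow> shift_invertible J G z \<and> cmod z * norm (res J G z) \<le> C"
    and "lin_op J G"
proof -
  obtain \<theta> where th: "sectorial_of_angle J G \<theta>" using assms unfolding sect_half_pi_def by auto
  then have "\<theta> < pi/2" "lin_op J G" unfolding sectorial_of_angle_def by auto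
  moreover have "pi/2 \<le> pi" by simp
  ultimately obtain C where "\<forall>z \<in> sector (pi - pi/2). shift_invertible J G z \<and> cmod z * norm (res J G z) \<le> C"
    using th unfolding sectorial_of_angle_def by blast
  moreover have "pi - pi/2 = pi/2" by simp
  ultimately show ?thesis using that sector_half \<open>lin_op J G\<close> by auto
qed

lemma sect_const_bound:
  assumes "sect_half_pi J G" "Re z > 0"
  shows "shift_invertible J G z" "cmod z * norm (res J G z) \<le> sect_const J G" "lin_op J G"
proof -
  obtain C where C: "\<And>z. Re z > 0 \<Longrightarrow> shift_invertible J G z \<and> cmod z * norm (res J G z) \<le> C"
    and "lin_op J G" using sect_bound[OF assms(1)] by blast
  show "shift_invertible J G z" "lin_op J G" using C assms(2) \<open>lin_op J G\<close> by auto
  have "bdd_above ((\<lambda>z. cmod z * norm (res J G z)) ` {z. Re z > 0})"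
    using C by (auto intro!: bdd_aboveI2)
  then show "cmod z * norm (res J G z) \<le> sect_const J G"
    unfolding sect_const_def using assms(2) by (auto intro!: cSUP_upper)
qed

definition pgood :: "'a::real_normed_vector \<Rightarrow> ('a \<times> real) set \<Rightarrow> bool" where
  "pgood y \<Gamma> \<longleftrightarrow> (\<forall>u a b. (u,a) \<in> \<Gamma> \<and> (u,b) \<in> \<Gamma> \<longrightarrow> a = b) \<and> (0,0) \<in> \<Gamma>
     \<and> (\<forall>u a v b. (u,a) \<in> \<Gamma> \<and> (v,b) \<in> \<Gamma> \<longrightarrow> (u+v, a+b) \<in> \<Gamma>)
     \<and> (\<forall>u a c. (u,a) \<in> \<Gamma> \<longrightarrow> (c *\<^sub>R u, c * a) \<in> \<Gamma>)
     \<and> (\<forall>u a. (u,a) \<in> \<Gamma> \<longrightarrow> a \<le> norm u) \<and> (y, norm y) \<in> \<Gamma>"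

lemma pgood_base: "pgood y {(c *\<^sub>R y, c * norm y) | c. True}"
proof -
  have sv: "a = b" if H: "(u,a) \<in> {(c *\<^sub>R y, c * norm y) | c. True}" "(u,b) \<in> {(c *\<^sub>R y, c * norm y) | c. True}" for u a b
  proof -
    obtain c d where h: "u = c *\<^sub>R y" "a = c * norm y" "u = d *\<^sub>R y" "b = d * norm y"
      using H by blast
    show ?thesis
    proof (cases "y = 0")
      case True then show ?thesis using h by simp
    next
      case False
      then have "c = d" using h(1,3) by (metis scaleR_cancel_right)
      then show ?thesis using h by simp
    qed
  qed
  have bd: "c * norm y \<le> norm (c *\<^sub>R y)" for c
    using mult_right_mono[OF abs_ge_self[of c] norm_ge_zero[of y]] by simp
  show ?thesis unfolding pgood_def
  proof (intro conjI allI impI)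
    show "(0, 0) \<in> {(c *\<^sub>R y, c * norm y) |c. True}"
      by (rule CollectI, rule exI[of _ 0]) simp
    fix u a w b assume "(u, a) \<in> {(c *\<^sub>R y, c * norm y) |c. True} \<and> (w, b) \<in> {(c *\<^sub>R y, c * norm y) |c. True}"
    then obtain c d where "u = c *\<^sub>R y" "a = c * norm y" "w = d *\<^sub>R y" "b = d * norm y" by blast
    then show "(u + w, a + b) \<in> {(c *\<^sub>R y, c * norm y) |c. True}"
      by (intro CollectI exI[of _ "c + d"]) (simp add: scaleR_add_left distrib_right)
  next
    fix u a r assume "(u, a) \<in> {(c *\<^sub>R y, c * norm y) |c. True}"
    then obtain c where "u = c *\<^sub>R y" "a = c * norm y" by blast
    then show "(r *\<^sub>R u, r * a) \<in> {(c *\<^sub>R y, c * norm y) |c. True}"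
      by (intro CollectI exI[of _ "r * c"]) simp
  next
    fix u a assume "(u, a) \<in> {(c *\<^sub>R y, c * norm y) |c. True}"
    then obtain c where "u = c *\<^sub>R y" "a = c * norm y" by blast
    then show "a \<le> norm u" using bd by simp
  next
    show "(y, norm y) \<in> {(c *\<^sub>R y, c * norm y) |c. True}"
      by (intro CollectI exI[of _ 1]) simp
  qed (use sv in blast)
qed

lemma pgood_union:
  assumes C: "C \<in> chains {\<Gamma>. pgood y \<Gamma>}" "C \<noteq> {}"
  shows "pgood y (\<Union>C)"
proof -
  have g: "\<And>\<Gamma>. \<Gamma> \<in> C \<Longrightarrow> pgood y \<Gamma>" using C unfolding chains_def by auto
  have two: "\<exists>\<Gamma>\<in>C. p \<in> \<Gamma> \<and> q \<in> \<Gamma>" if H: "p \<in> \<Union>C" "q \<in> \<Union>C" for p q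
  proof -
    obtain \<Gamma>1 \<Gamma>2 where "\<Gamma>1 \<in> C" "\<Gamma>2 \<in> C" "p \<in> \<Gamma>1" "q \<in> \<Gamma>2" using H by (meson UnionE)
    then show ?thesis using chainsD[OF C(1), of \<Gamma>1 \<Gamma>2] by auto
  qed
  obtain \<Gamma>0 where "\<Gamma>0 \<in> C" using C(2) by auto
  show ?thesis unfolding pgood_def
  proof (intro conjI allI impI)
    fix u a b assume "(u,a) \<in> \<Union>C \<and> (u,b) \<in> \<Union>C"
    then obtain \<Gamma> where "\<Gamma> \<in> C" "(u,a) \<in> \<Gamma>" "(u,b) \<in> \<Gamma>" using two by blast
    then show "a = b" using g unfolding pgood_def by blast
  next
    show "(0,0) \<in> \<Union>C" using g \<open>\<Gamma>0 \<in> C\<close> unfolding pgood_def by blast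
  next
    fix u a v b assume "(u,a) \<in> \<Union>C \<and> (v,b) \<in> \<Union>C"
    then obtain \<Gamma> where "\<Gamma> \<in> C" "(u,a) \<in> \<Gamma>" "(v,b) \<in> \<Gamma>" using two by blast
    then show "(u+v, a+b) \<in> \<Union>C" using g unfolding pgood_def by blast
  next
    fix u a c assume "(u,a) \<in> \<Union>C"
    then show "(c *\<^sub>R u, c * a) \<in> \<Union>C" using g unfolding pgood_def by blast
  next
    fix u a assume "(u,a) \<in> \<Union>C"
    then show "a \<le> norm u" using g unfolding pgood_def by blast
  next
    show "(y, norm y) \<in> \<Union>C" using g \<open>\<Gamma>0 \<in> C\<close> unfolding pgood_def by blast
  qed
qed

lemma pgood_extend:
  assumes g: "pgood y \<Gamma>" and v: "v \<notin> Domain \<Gamma>"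
  shows "\<exists>\<Gamma>'. pgood y \<Gamma>' \<and> \<Gamma> \<subseteq> \<Gamma>' \<and> \<Gamma>' \<noteq> \<Gamma>"
proof -
  have sv: "\<And>u a b. (u,a) \<in> \<Gamma> \<Longrightarrow> (u,b) \<in> \<Gamma> \<Longrightarrow> a = b"
    and z: "(0,0) \<in> \<Gamma>"
    and ad: "\<And>u a w b. (u,a) \<in> \<Gamma> \<Longrightarrow> (w,b) \<in> \<Gamma> \<Longrightarrow> (u+w, a+b) \<in> \<Gamma>"
    and sc: "\<And>u a c. (u,a) \<in> \<Gamma> \<Longrightarrow> (c *\<^sub>R u, c * a) \<in> \<Gamma>"
    and bd: "\<And>u a. (u,a) \<in> \<Gamma> \<Longrightarrow> a \<le> norm u"
    and yy: "(y, norm y) \<in> \<Gamma>"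
    using g unfolding pgood_def by blast+
  define S where "S = {a - norm (u - v) | u a. (u,a) \<in> \<Gamma>}"
  define c where "c = Sup S"
  have key: "a - norm (u - v) \<le> norm (w + v) - b" if "(u,a) \<in> \<Gamma>" "(w,b) \<in> \<Gamma>" for u a w b
  proof -
    have "a + b \<le> norm (u + w)" using bd[OF ad[OF that]] .
    also have "norm (u + w) \<le> norm (u - v) + norm (w + v)"
      using norm_triangle_ineq[of "u - v" "w + v"] by simp
    finally show ?thesis by simp
  qed
  have Sne: "S \<noteq> {}" using z unfolding S_def by blast
  have Sbdd: "bdd_above S" unfolding S_def bdd_above_def using key[OF _ z] by auto
  have c_ge: "a - norm (u - v) \<le> c" if "(u,a) \<in> \<Gamma>" for u a
    unfolding c_def using that Sbdd by (auto intro!: cSup_upper simp: S_def)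
  have c_le: "c \<le> norm (w + v) - b" if "(w,b) \<in> \<Gamma>" for w b
    unfolding c_def using Sne key[OF _ that] by (auto intro!: cSup_least simp: S_def)
  define \<Gamma>' where "\<Gamma>' = {(u + t *\<^sub>R v, a + t * c) | u a t. (u,a) \<in> \<Gamma>}"
  have sub: "\<Gamma> \<subseteq> \<Gamma>'" unfolding \<Gamma>'_def by force
  have new: "(v, c) \<in> \<Gamma>'" unfolding \<Gamma>'_def using z by force
  have neq: "\<Gamma>' \<noteq> \<Gamma>" using new v by blast
  have g': "pgood y \<Gamma>'" unfolding pgood_def
  proof (intro conjI allI impI)
    fix w a b assume "(w,a) \<in> \<Gamma>' \<and> (w,b) \<in> \<Gamma>'"
    then obtain u1 a1 t1 u2 a2 t2 where h: "(u1,a1) \<in> \<Gamma>" "(u2,a2) \<in> \<Gamma>"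
      "w = u1 + t1 *\<^sub>R v" "a = a1 + t1 * c" "w = u2 + t2 *\<^sub>R v" "b = a2 + t2 * c"
      unfolding \<Gamma>'_def by blast
    show "a = b"
    proof (cases "t1 = t2")
      case True
      then have "u1 = u2" using h by simp
      then show ?thesis using sv h True by auto
    next
      case False
      have "(u2 + (-1) *\<^sub>R u1, a2 + (-1) * a1) \<in> \<Gamma>" using ad[OF h(2) sc[OF h(1)]] .
      then have "((1/(t1 - t2)) *\<^sub>R (u2 - u1), (1/(t1 - t2)) * (a2 - a1)) \<in> \<Gamma>"
        using sc[of "u2 - u1" "a2 - a1" "1/(t1 - t2)"] by simp
      moreover have "(1/(t1 - t2)) *\<^sub>R (u2 - u1) = v"
      proof -
        have "u2 - u1 = (t1 - t2) *\<^sub>R v" using h(3,5) by (simp add: algebra_simps)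
        then show ?thesis using False by simp
      qed
      ultimately have "v \<in> Domain \<Gamma>" by force
      then show ?thesis using v by blast
    qed
  next
    show "(0,0) \<in> \<Gamma>'" unfolding \<Gamma>'_def using z by force
  next
    fix w a w' b assume "(w,a) \<in> \<Gamma>' \<and> (w',b) \<in> \<Gamma>'"
    then obtain u1 a1 t1 u2 a2 t2 where h: "(u1,a1) \<in> \<Gamma>" "(u2,a2) \<in> \<Gamma>"
      "w = u1 + t1 *\<^sub>R v" "a = a1 + t1 * c" "w' = u2 + t2 *\<^sub>R v" "b = a2 + t2 * c"
      unfolding \<Gamma>'_def by blast
    have "(u1 + u2, a1 + a2) \<in> \<Gamma>" using ad h by blast
    moreover have "w + w' = (u1 + u2) + (t1 + t2) *\<^sub>R v" "a + b = (a1 + a2) + (t1 + t2) * c"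
      using h by (simp_all add: algebra_simps)
    ultimately show "(w + w', a + b) \<in> \<Gamma>'" unfolding \<Gamma>'_def by blast
  next
    fix w a s assume "(w,a) \<in> \<Gamma>'"
    then obtain u1 a1 t1 where h: "(u1,a1) \<in> \<Gamma>" "w = u1 + t1 *\<^sub>R v" "a = a1 + t1 * c"
      unfolding \<Gamma>'_def by blast
    have "(s *\<^sub>R u1, s * a1) \<in> \<Gamma>" using sc h by blast
    moreover have "s *\<^sub>R w = s *\<^sub>R u1 + (s * t1) *\<^sub>R v" "s * a = s * a1 + (s * t1) * c"
      using h by (simp_all add: algebra_simps)
    ultimately show "(s *\<^sub>R w, s * a) \<in> \<Gamma>'" unfolding \<Gamma>'_def by blast
  next
    fix w a assume "(w,a) \<in> \<Gamma>'"
    then obtain u a1 t where h: "(u,a1) \<in> \<Gamma>" "w = u + t *\<^sub>R v" "a = a1 + t * c"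
      unfolding \<Gamma>'_def by blast
    show "a \<le> norm w"
    proof (cases t "0::real" rule: linorder_cases)
      case equal then show ?thesis using h bd by simp
    next
      case greater
      have "c \<le> norm ((1/t) *\<^sub>R u + v) - (1/t) * a1" using c_le[OF sc[OF h(1)]] .
      then have "t * c \<le> t * (norm ((1/t) *\<^sub>R u + v) - (1/t) * a1)"
        using greater by (simp add: mult_left_mono)
      also have "\<dots> = t * norm ((1/t) *\<^sub>R u + v) - a1"
        using greater by (simp add: right_diff_distrib)
      also have "t * norm ((1/t) *\<^sub>R u + v) = norm (t *\<^sub>R ((1/t) *\<^sub>R u + v))"
        by (simp only: norm_scaleR abs_of_pos[OF greater])
      also have "t *\<^sub>R ((1/t) *\<^sub>R u + v) = w" using h greater by (simp add: algebra_simps)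
      finally show ?thesis using h by simp
    next
      case less
      define s where "s = - t"
      have s: "s > 0" using less s_def by simp
      have "(1/s) * a1 - norm ((1/s) *\<^sub>R u - v) \<le> c" using c_ge[OF sc[OF h(1)]] .
      then have "s * ((1/s) * a1 - norm ((1/s) *\<^sub>R u - v)) \<le> s * c"
        using s by (simp add: mult_left_mono)
      moreover have "s * ((1/s) * a1 - norm ((1/s) *\<^sub>R u - v)) = a1 - s * norm ((1/s) *\<^sub>R u - v)"
        using s by (simp add: right_diff_distrib)
      moreover have "s * norm ((1/s) *\<^sub>R u - v) = norm (s *\<^sub>R ((1/s) *\<^sub>R u - v))"
        by (simp only: norm_scaleR abs_of_pos[OF s])
      moreover have "s *\<^sub>R ((1/s) *\<^sub>R u - v) = w" using h s s_def by (simp add: algebra_simps)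
      ultimately have "a1 - norm w \<le> s * c" by metis
      then show ?thesis using h s_def by simp
    qed
  next
    show "(y, norm y) \<in> \<Gamma>'" using sub yy by blast
  qed
  show ?thesis using g' sub neq by blast
qed

lemma hahn_banach_norm:
  fixes y :: "'a::real_normed_vector"
  shows "\<exists>\<phi>. linear \<phi> \<and> (\<forall>v. \<phi> v \<le> norm v) \<and> \<phi> y = norm y"
proof -
  have "\<forall>C\<in>chains {\<Gamma>. pgood y \<Gamma>}. \<exists>U\<in>{\<Gamma>. pgood y \<Gamma>}. \<forall>X\<in>C. X \<subseteq> U"
  proof
    fix C assume C: "C \<in> chains {\<Gamma>. pgood y \<Gamma>}"
    show "\<exists>U\<in>{\<Gamma>. pgood y \<Gamma>}. \<forall>X\<in>C. X \<subseteq> U"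
    proof (cases "C = {}")
      case True then show ?thesis using pgood_base by blast
    next
      case False then show ?thesis using pgood_union[OF C] by blast
    qed
  qed
  from Zorn_Lemma2[OF this] obtain \<Gamma> where g: "pgood y \<Gamma>"
    and mx: "\<And>X. pgood y X \<Longrightarrow> \<Gamma> \<subseteq> X \<Longrightarrow> X = \<Gamma>" by blast
  have dom: "v \<in> Domain \<Gamma>" for v
    using pgood_extend[OF g, of v] mx by blast
  have sv: "\<And>u a b. (u,a) \<in> \<Gamma> \<Longrightarrow> (u,b) \<in> \<Gamma> \<Longrightarrow> a = b"
    and ad: "\<And>u a w b. (u,a) \<in> \<Gamma> \<Longrightarrow> (w,b) \<in> \<Gamma> \<Longrightarrow> (u+w, a+b) \<in> \<Gamma>"
    and sc: "\<And>u a c. (u,a) \<in> \<Gamma> \<Longrightarrow> (c *\<^sub>R u, c * a) \<in> \<Gamma>"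
    and bd: "\<And>u a. (u,a) \<in> \<Gamma> \<Longrightarrow> a \<le> norm u"
    and yy: "(y, norm y) \<in> \<Gamma>"
    using g unfolding pgood_def by blast+
  define \<phi> where "\<phi> v = (THE a. (v,a) \<in> \<Gamma>)" for v
  have mem: "(v, \<phi> v) \<in> \<Gamma>" for v
  proof -
    obtain a where "(v,a) \<in> \<Gamma>" using dom[of v] by blast
    then show ?thesis unfolding \<phi>_def by (rule theI) (use sv \<open>(v,a) \<in> \<Gamma>\<close> in blast)
  qed
  have lin: "linear \<phi>"
  proof (rule linearI)
    fix u w show "\<phi> (u + w) = \<phi> u + \<phi> w" using sv[OF mem ad[OF mem mem]] .
  next
    fix r u show "\<phi> (r *\<^sub>R u) = r *\<^sub>R \<phi> u" using sv[OF mem sc[OF mem]] by simp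
  qed
  show ?thesis using lin bd[OF mem] sv[OF mem yy] by blast
qed

context
  fixes J :: "'a::banach \<Rightarrow> 'a" and G :: "('a \<times> 'a) set"
  assumes cs: "complex_structure J" and sect: "sect_half_pi J G"
begin

abbreviation "R \<equiv> res J G"
abbreviation "M \<equiv> sect_const J G"

lemma inv: "Re w > 0 \<Longrightarrow> shift_invertible J G w"
  using sect_const_bound[OF sect] by blast

lemma lin: "lin_op J G"
  using sect_bound[OF sect] by blast

lemma Rbound: "Re w > 0 \<Longrightarrow> norm (R w v) \<le> M / cmod w * norm v"
proof -
  assume w: "Re w > 0"
  then have w0: "cmod w > 0" by auto
  have "norm (R w) \<le> M / cmod w"
    using sect_const_bound(2)[OF sect w] by (subst pos_le_divide_eq[OF w0]) (metis mult.commute)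
  then show ?thesis
    by (meson norm_blinfun mult_right_mono norm_ge_zero order_trans)
qed

lemma M_nonneg: "M \<ge> 0"
proof -
  have "cmod 1 * norm (R 1) \<le> M" using sect_const_bound(2)[OF sect, of 1] by simp
  moreover have "cmod 1 * norm (R 1) \<ge> 0" by simp
  ultimately show ?thesis by linarith
qed

lemma Rcont:
  assumes z: "Re z > 0"
  shows "((\<lambda>w. R w v) \<longlongrightarrow> R z v) (at z)"
proof -
  have ev: "eventually (\<lambda>w. Re w > Re z / 2) (at z)"
  proof -
    have "open {w. Re w > Re z / 2}" by (rule open_halfspace_Re_gt)
    moreover have "z \<in> {w. Re w > Re z / 2}" using z by simp
    ultimately have "eventually (\<lambda>w. w \<in> {w. Re w > Re z / 2}) (nhds z)"
      using eventually_nhds by blast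
    then have "eventually (\<lambda>w. Re w > Re z / 2) (nhds z)" by simp
    then show ?thesis by (simp add: eventually_nhds_conv_at)
  qed
  have "((\<lambda>w. R w v - R z v) \<longlongrightarrow> 0) (at z)"
  proof (rule Lim_null_comparison)
    show "eventually (\<lambda>w. norm (R w v - R z v) \<le> cmod (z - w) * (2 * M / Re z * norm (R z v))) (at z)"
      using ev
    proof (rule eventually_mono)
      fix w assume w: "Re z / 2 < Re w"
      then have w0: "Re w > 0" using z by simp
      have "R w v - R z v = cscale J (z - w) (R w (R z v))"
        by (rule res_identity[OF cs lin inv[OF w0] inv[OF z]])
      then have e: "norm (R w v - R z v) = cmod (z - w) * norm (R w (R z v))"
        using cs_J(3)[OF cs] by simp
      have b1: "norm (R w (R z v)) \<le> M / cmod w * norm (R z v)" by (rule Rbound[OF w0])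
      have b2: "M / cmod w \<le> 2 * M / Re z"
      proof -
        have "Re z / 2 \<le> cmod w" using w complex_Re_le_cmod[of w] by linarith
        then have "M / cmod w \<le> M / (Re z / 2)"
          by (rule divide_left_mono) (use M_nonneg z w0 in \<open>auto intro!: mult_pos_pos\<close>)
        then show ?thesis by (simp add: mult.commute)
      qed
      have "norm (R w (R z v)) \<le> 2 * M / Re z * norm (R z v)"
        using b1 mult_right_mono[OF b2 norm_ge_zero[of "R z v"]] by linarith
      then show "norm (R w v - R z v) \<le> cmod (z - w) * (2 * M / Re z * norm (R z v))"
        unfolding e by (rule mult_left_mono) simp
    qed
    have t1: "((\<lambda>w. z - w) \<longlongrightarrow> 0) (at z)"
      using tendsto_diff[OF tendsto_const tendsto_ident_at, of z z UNIV] by simp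
    show "((\<lambda>w. cmod (z - w) * (2 * M / Re z * norm (R z v))) \<longlongrightarrow> 0) (at z)"
      by (rule tendsto_mult_left_zero[OF tendsto_norm_zero[OF t1]])
  qed
  then show ?thesis by (simp add: LIM_zero_iff)
qed


lemma blJ: "bounded_linear J"
  by (rule bounded_linear_intro[of _ 1])
     (use linear_add[OF cs_J(1)[OF cs]] linear_scale[OF cs_J(1)[OF cs]] norm_J[OF cs] in auto)

lemma phi_abs:
  assumes "linear \<phi>" "\<forall>v. \<phi> v \<le> norm v"
  shows "\<bar>\<phi> v\<bar> \<le> norm v"
proof -
  have "\<phi> (- v) = - \<phi> v" using linear_neg[OF assms(1)] .
  then have "- \<phi> v \<le> norm v" using assms(2) by (metis norm_minus_cancel)
  moreover have "\<phi> v \<le> norm v" using assms(2) by blast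
  ultimately show ?thesis by linarith
qed

lemma phi_bl:
  assumes "linear \<phi>" "\<forall>v. \<phi> v \<le> norm v"
  shows "bounded_linear \<phi>"
  by (rule bounded_linear_intro[of _ 1])
     (use linear_add[OF assms(1)] linear_scale[OF assms(1)] phi_abs[OF assms] in auto)

lemma ell_cscale:
  assumes "linear \<phi>"
  shows "Complex (\<phi> (cscale J c v)) (- \<phi> (J (cscale J c v))) = c * Complex (\<phi> v) (- \<phi> (J v))"
proof -
  have lJ: "linear J" using cs_J(1)[OF cs] .
  have "J (cscale J c v) = Re c *\<^sub>R J v - Im c *\<^sub>R v"
    unfolding cscale_def using linear_add[OF lJ] linear_scale[OF lJ] cs_J(2)[OF cs] by simp
  then have e2: "\<phi> (J (cscale J c v)) = Re c * \<phi> (J v) - Im c * \<phi> v"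
    using linear_diff[OF assms] linear_scale[OF assms] by simp
  have e1: "\<phi> (cscale J c v) = Re c * \<phi> v + Im c * \<phi> (J v)"
    unfolding cscale_def using linear_add[OF assms] linear_scale[OF assms] by simp
  show ?thesis unfolding e1 e2 by (simp add: complex_eq_iff algebra_simps)
qed

lemma ell_bound:
  assumes "linear \<phi>" "\<forall>v. \<phi> v \<le> norm v"
  shows "cmod (Complex (\<phi> v) (- \<phi> (J v))) \<le> 2 * norm v"
proof -
  have "cmod (Complex (\<phi> v) (- \<phi> (J v))) \<le> \<bar>\<phi> v\<bar> + \<bar>- \<phi> (J v)\<bar>"
    using cmod_le[of "Complex (\<phi> v) (- \<phi> (J v))"] by simp
  also have "\<dots> \<le> norm v + norm (J v)" using phi_abs[OF assms, of v] phi_abs[OF assms, of "J v"] by simp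
  finally show ?thesis using norm_J[OF cs, of v] by simp
qed

lemma R2_bound:
  assumes z: "Re z > 0"
  shows "norm (R z (R z x)) \<le> 8 * M * norm x / (Re z * cmod z)"
proof -
  define y where "y = R z (R z x)"
  obtain \<phi> where phl: "linear \<phi>" and phb: "\<forall>v. \<phi> v \<le> norm v" and phy: "\<phi> y = norm y"
    using hahn_banach_norm[of y] by blast
  define ell where "ell v = Complex (\<phi> v) (- \<phi> (J v))" for v
  have ellsc: "ell (cscale J c v) = c * ell v" for c v unfolding ell_def by (rule ell_cscale[OF phl])
  have elldiff: "ell (a - b) = ell a - ell b" for a b
    unfolding ell_def using linear_diff[OF phl] linear_diff[OF cs_J(1)[OF cs]] by (simp add: complex_eq_iff)
  have ellbd: "cmod (ell v) \<le> 2 * norm v" for v unfolding ell_def by (rule ell_bound[OF phl phb])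
  have elltends: "((\<lambda>w. ell (g w)) \<longlongrightarrow> ell L) F" if "(g \<longlongrightarrow> L) F" for g L and F :: "complex filter"
    unfolding ell_def
    by (intro tendsto_Complex tendsto_minus bounded_linear.tendsto[OF phi_bl[OF phl phb]]
          bounded_linear.tendsto[OF blJ] that)
  define f where "f w = ell (R w x)" for w
  have deriv: "(f has_field_derivative (- ell (R \<zeta> (R \<zeta> x)))) (at \<zeta>)" if \<zeta>: "Re \<zeta> > 0" for \<zeta>
  proof -
    have ev: "eventually (\<lambda>w. Re w > 0) (at \<zeta>)"
    proof -
      have "eventually (\<lambda>w. w \<in> {w. Re w > 0}) (nhds \<zeta>)"
        by (rule eventually_nhds_in_open) (use \<zeta> open_halfspace_Re_gt[of 0] in auto)
      then show ?thesis by (simp add: eventually_nhds_conv_at)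
    qed
    have ev2: "eventually (\<lambda>w. w \<noteq> \<zeta>) (at \<zeta>)" by (rule eventually_neq_at_within)
    have "eventually (\<lambda>w. - ell (R w (R \<zeta> x)) = (f w - f \<zeta>) / (w - \<zeta>)) (at \<zeta>)"
      using ev ev2
    proof (rule eventually_elim2)
      fix w assume w: "Re w > 0" "w \<noteq> \<zeta>"
      have "f w - f \<zeta> = ell (R w x - R \<zeta> x)" unfolding f_def elldiff ..
      also have "R w x - R \<zeta> x = cscale J (\<zeta> - w) (R w (R \<zeta> x))"
        by (rule res_identity[OF cs lin inv[OF w(1)] inv[OF \<zeta>]])
      finally have "f w - f \<zeta> = (\<zeta> - w) * ell (R w (R \<zeta> x))" using ellsc by simp
      then show "- ell (R w (R \<zeta> x)) = (f w - f \<zeta>) / (w - \<zeta>)"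
        using w(2) by (simp add: field_simps)
    qed
    moreover have "((\<lambda>w. - ell (R w (R \<zeta> x))) \<longlongrightarrow> - ell (R \<zeta> (R \<zeta> x))) (at \<zeta>)"
      by (intro tendsto_minus elltends Rcont \<zeta>)
    ultimately have "((\<lambda>w. (f w - f \<zeta>) / (w - \<zeta>)) \<longlongrightarrow> - ell (R \<zeta> (R \<zeta> x))) (at \<zeta>)"
      by (rule Lim_transform_eventually[rotated])
    then show ?thesis by (simp add: has_field_derivative_iff)
  qed
  have hol: "f holomorphic_on {w. Re w > 0}"
    unfolding holomorphic_on_def field_differentiable_def
    using deriv by (meson has_field_derivative_at_within mem_Collect_eq)
  define r where "r = Re z / 2"
  have r: "r > 0" using z r_def by simp
  have ballsub: "cball z r \<subseteq> {w. Re w > 0}"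
  proof
    fix w assume "w \<in> cball z r"
    then have "cmod (z - w) \<le> r" by (simp add: dist_norm)
    moreover have "Re z - Re w \<le> cmod (z - w)" using complex_Re_le_cmod[of "z - w"] by simp
    ultimately show "w \<in> {w. Re w > 0}" using r_def z by simp
  qed
  have hol2: "f holomorphic_on ball z r"
    by (rule holomorphic_on_subset[OF hol]) (use ballsub ball_subset_cball[of z r] in blast)
  have cont: "continuous_on (cball z r) f"
    by (rule continuous_on_subset[OF holomorphic_on_imp_continuous_on[OF hol] ballsub])
  define B where "B = 4 * M * norm x / cmod z"
  have zc: "cmod z > 0" using z by auto
  have circ: "cmod (f w) \<le> B" if w: "cmod (z - w) = r" for w
  proof -
    have wre: "Re w > 0" using ballsub w by (auto simp: dist_norm)
    have "cmod z \<le> cmod w + cmod (z - w)" using norm_triangle_ineq[of w "z - w"] by simp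
    moreover have "Re z \<le> cmod z" by (rule complex_Re_le_cmod)
    ultimately have wz: "cmod z / 2 \<le> cmod w" using w r_def by simp
    have "cmod (f w) \<le> 2 * norm (R w x)" unfolding f_def by (rule ellbd)
    also have "norm (R w x) \<le> M / cmod w * norm x" by (rule Rbound[OF wre])
    also have "M / cmod w \<le> M / (cmod z / 2)"
      by (rule divide_left_mono) (use M_nonneg wz zc in \<open>auto intro!: mult_pos_pos\<close>)
    finally have "cmod (f w) \<le> 2 * (M / (cmod z / 2) * norm x)"
      by (simp add: mult_right_mono)
    then show ?thesis unfolding B_def by (simp add: field_simps)
  qed
  have "cmod ((deriv ^^ 1) f z) \<le> fact 1 * B / r ^ 1"
    by (rule Cauchy_inequality[OF hol2 cont r]) (use circ in \<open>simp add: norm_minus_commute\<close>)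
  then have c1: "cmod (deriv f z) \<le> B / r" by simp
  have "deriv f z = - ell y" unfolding y_def by (rule DERIV_imp_deriv[OF deriv[OF z]])
  then have "cmod (ell y) \<le> B / r" using c1 by simp
  moreover have "norm y \<le> cmod (ell y)"
    using complex_Re_le_cmod[of "ell y"] phy unfolding ell_def by simp
  ultimately have "norm y \<le> B / r" by linarith
  also have "B / r = 8 * M * norm x / (Re z * cmod z)" unfolding B_def r_def by (simp add: field_simps)
  finally show ?thesis unfolding y_def .
qed

lemma R2_norm1:
  assumes z: "Re z > 0"
  shows "norm (R z o\<^sub>L R z) \<le> 8 * M / (Re z * cmod z)"
proof (rule norm_blinfun_bound)
  show "0 \<le> 8 * M / (Re z * cmod z)" using M_nonneg z by simp
  fix x show "norm (blinfun_apply (R z o\<^sub>L R z) x) \<le> 8 * M / (Re z * cmod z) * norm x"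
    using R2_bound[OF z, of x] by simp
qed

lemma R2_norm2:
  assumes z: "Re z > 0"
  shows "norm (R z o\<^sub>L R z) \<le> (M / cmod z)^2"
proof (rule norm_blinfun_bound)
  show "0 \<le> (M / cmod z)^2" by simp
  fix x
  have "norm (R z (R z x)) \<le> M / cmod z * norm (R z x)" by (rule Rbound[OF z])
  also have "\<dots> \<le> M / cmod z * (M / cmod z * norm x)"
    by (rule mult_left_mono[OF Rbound[OF z]]) (use M_nonneg in simp)
  finally show "norm (blinfun_apply (R z o\<^sub>L R z) x) \<le> (M / cmod z)^2 * norm x"
    by (simp add: power2_eq_square)
qed

end

lemma int_P1:
  fixes \<alpha> c :: real
  assumes "\<alpha> > 0" "c \<ge> 0"
  shows "(\<integral>\<^sup>+t. ennreal c * indicator {0..\<alpha>} t \<partial>lborel) = ennreal (c * \<alpha>)"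
  using assms by (simp add: nn_integral_cmult_indicator ennreal_mult)

lemma int_P2:
  fixes \<alpha> M c :: real
  assumes "\<alpha> > 0" "M \<ge> 1" "c \<ge> 0"
  shows "(\<integral>\<^sup>+t. ennreal (c / t) * indicator {\<alpha>..M*\<alpha>} t \<partial>lborel) = ennreal (c * ln M)"
proof -
  have "((\<lambda>t. c / t) has_integral (c * ln (M*\<alpha>) - c * ln \<alpha>)) {\<alpha>..M*\<alpha>}"
  proof (rule fundamental_theorem_of_calculus)
    show "\<alpha> \<le> M * \<alpha>" using assms by simp
    fix t assume t: "t \<in> {\<alpha>..M*\<alpha>}"
    then have "t > 0" using assms by simp
    then show "((\<lambda>t. c * ln t) has_vector_derivative c / t) (at t within {\<alpha>..M*\<alpha>})"
      by (auto intro!: derivative_eq_intros simp: has_real_derivative_iff_has_vector_derivative[symmetric] field_simps)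
  qed
  moreover have "c * ln (M*\<alpha>) - c * ln \<alpha> = c * ln M"
    using assms by (simp add: ln_mult algebra_simps)
  ultimately have hi: "((\<lambda>t. c / t) has_integral (c * ln M)) {\<alpha>..M*\<alpha>}" by simp
  show ?thesis
    by (rule nn_integral_has_integral_lebesgue'[OF _ hi]) (use assms in auto)
qed

lemma int_P3:
  fixes \<alpha> M :: real
  assumes "\<alpha> > 0" "M \<ge> 1"
  shows "(\<integral>\<^sup>+t. ennreal (M^2 / t^2) * indicator {M*\<alpha>..} t \<partial>lborel) = ennreal (M / \<alpha>)"
proof -
  have a: "M * \<alpha> > 0" using assms by simp
  define F where "F t = - ((M^2) / t)" for t :: real
  have "(\<integral>\<^sup>+t. ennreal (M^2 / t^2) * indicator {M*\<alpha>..} t \<partial>lborel) = 0 - F (M * \<alpha>)"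
  proof (rule nn_integral_FTC_atLeast)
    show "(\<lambda>t. M^2 / t^2) \<in> borel_measurable borel" by measurable
    fix t assume t: "M * \<alpha> \<le> t"
    then have "t > 0" using a by simp
    then show "DERIV F t :> M^2 / t^2"
      unfolding F_def by (auto intro!: derivative_eq_intros simp: field_simps power2_eq_square)
    show "0 \<le> M^2 / t^2" by simp
  next
    show "(F \<longlongrightarrow> 0) at_top" unfolding F_def
      by (intro tendsto_minus_cancel_left[THEN iffD1]) (use tendsto_divide_0[OF tendsto_const filterlim_at_top_imp_at_infinity[OF filterlim_ident], of "M^2"] in simp)
  qed
  also have "0 - F (M * \<alpha>) = M / \<alpha>" using assms unfolding F_def by (simp add: power2_eq_square)
  finally show ?thesis by simp
qed

lemma key_integral:
  fixes \<alpha> M :: real and f :: "real \<Rightarrow> real"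
  assumes a: "\<alpha> > 0" and M: "M \<ge> 1" and nonneg: "\<And>\<beta>. 0 \<le> f \<beta>"
    and b1: "\<And>\<beta>. \<bar>\<beta>\<bar> \<le> \<alpha> \<Longrightarrow> f \<beta> \<le> 8 * M / \<alpha>^2"
    and b2: "\<And>\<beta>. \<alpha> \<le> \<bar>\<beta>\<bar> \<Longrightarrow> \<bar>\<beta>\<bar> \<le> M * \<alpha> \<Longrightarrow> f \<beta> \<le> 8 * M / \<alpha> / \<bar>\<beta>\<bar>"
    and b3: "\<And>\<beta>. M * \<alpha> \<le> \<bar>\<beta>\<bar> \<Longrightarrow> f \<beta> \<le> M^2 / \<beta>^2"
  shows "ennreal \<alpha> * (\<integral>\<^sup>+\<beta>. ennreal (f \<beta>) \<partial>lborel) \<le> ennreal (16 * M * ln M + 18 * M)"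
proof -
  define G where "G t = ennreal (8 * M / \<alpha>^2) * indicator {0..\<alpha>} t
     + ennreal (8 * M / \<alpha> / t) * indicator {\<alpha>..M*\<alpha>} t + ennreal (M^2 / t^2) * indicator {M*\<alpha>..} t" for t :: real
  have Gm: "G \<in> borel_measurable borel" unfolding G_def by measurable
  have Gm1: "G \<in> borel_measurable lborel" using Gm by measurable
  have Gm2: "(\<lambda>x. G (- x)) \<in> borel_measurable lborel" using Gm by measurable
  have m1: "(\<lambda>t. ennreal (8 * M / \<alpha>^2) * indicator {0..\<alpha>} t
     + ennreal (8 * M / \<alpha> / t) * indicator {\<alpha>..M*\<alpha>} t) \<in> borel_measurable lborel" by measurable
  have m2: "(\<lambda>t. ennreal (M^2 / t^2) * indicator {M*\<alpha>..} t) \<in> borel_measurable lborel" by measurable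
  have m3: "(\<lambda>t. ennreal (8 * M / \<alpha>^2) * indicator {0..\<alpha>} t) \<in> borel_measurable lborel" by measurable
  have m4: "(\<lambda>t. ennreal (8 * M / \<alpha> / t) * indicator {\<alpha>..M*\<alpha>} t) \<in> borel_measurable lborel" by measurable
  have pw: "ennreal (f \<beta>) \<le> G \<bar>\<beta>\<bar>" for \<beta>
  proof -
    consider "\<bar>\<beta>\<bar> \<le> \<alpha>" | "\<alpha> < \<bar>\<beta>\<bar> \<and> \<bar>\<beta>\<bar> \<le> M*\<alpha>" | "M*\<alpha> < \<bar>\<beta>\<bar>" by linarith
    then show ?thesis
    proof cases
      case 1
      have "ennreal (f \<beta>) \<le> ennreal (8 * M / \<alpha>^2)" using b1[OF 1] by (rule ennreal_leI)
      also have "\<dots> \<le> G \<bar>\<beta>\<bar>" unfolding G_def using 1 by (auto intro!: add_increasing2)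
      finally show ?thesis .
    next
      case 2
      have "ennreal (f \<beta>) \<le> ennreal (8 * M / \<alpha> / \<bar>\<beta>\<bar>)" using b2 2 by (intro ennreal_leI) auto
      also have "\<dots> \<le> G \<bar>\<beta>\<bar>" unfolding G_def using 2 by (auto intro!: add_increasing2 add_increasing)
      finally show ?thesis .
    next
      case 3
      have "ennreal (f \<beta>) \<le> ennreal (M^2 / \<bar>\<beta>\<bar>^2)" using b3 3 by (intro ennreal_leI) auto
      also have "\<dots> \<le> G \<bar>\<beta>\<bar>" unfolding G_def using 3 by (auto intro!: add_increasing2 add_increasing)
      finally show ?thesis .
    qed
  qed
  have pw2: "ennreal (f \<beta>) \<le> G \<beta> + G (- \<beta>)" for \<beta>
  proof (cases "\<beta> \<ge> 0")
    case True then show ?thesis using pw[of \<beta>] by (auto intro: order_trans add_increasing2)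
  next
    case False then show ?thesis using pw[of \<beta>] by (auto intro: order_trans add_increasing)
  qed
  have "(\<integral>\<^sup>+\<beta>. ennreal (f \<beta>) \<partial>lborel) \<le> (\<integral>\<^sup>+\<beta>. G \<beta> + G (- \<beta>) \<partial>lborel)"
    by (rule nn_integral_mono) (rule pw2)
  also have "\<dots> = (\<integral>\<^sup>+\<beta>. G \<beta> \<partial>lborel) + (\<integral>\<^sup>+\<beta>. G (- \<beta>) \<partial>lborel)"
    by (rule nn_integral_add[OF Gm1 Gm2])
  also have "(\<integral>\<^sup>+\<beta>. G (- \<beta>) \<partial>lborel) = (\<integral>\<^sup>+\<beta>. G \<beta> \<partial>lborel)"
  proof -
    have "(\<integral>\<^sup>+\<beta>. G \<beta> \<partial>lborel) = ennreal \<bar>-1\<bar> * (\<integral>\<^sup>+x. G (0 + (-1) * x) \<partial>lborel)"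
      by (rule nn_integral_real_affine[OF Gm]) simp
    then show ?thesis by simp
  qed
  also have "(\<integral>\<^sup>+\<beta>. G \<beta> \<partial>lborel) = ennreal (8 * M / \<alpha>^2 * \<alpha>) + ennreal (8 * M / \<alpha> * ln M) + ennreal (M / \<alpha>)"
  proof -
    have "(\<integral>\<^sup>+\<beta>. G \<beta> \<partial>lborel) = (\<integral>\<^sup>+t. ennreal (8 * M / \<alpha>^2) * indicator {0..\<alpha>} t
     + ennreal (8 * M / \<alpha> / t) * indicator {\<alpha>..M*\<alpha>} t \<partial>lborel) + (\<integral>\<^sup>+t. ennreal (M^2 / t^2) * indicator {M*\<alpha>..} t \<partial>lborel)"
      unfolding G_def by (rule nn_integral_add[OF m1 m2])
    also have "(\<integral>\<^sup>+t. ennreal (8 * M / \<alpha>^2) * indicator {0..\<alpha>} t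
     + ennreal (8 * M / \<alpha> / t) * indicator {\<alpha>..M*\<alpha>} t \<partial>lborel) =
       (\<integral>\<^sup>+t. ennreal (8 * M / \<alpha>^2) * indicator {0..\<alpha>} t \<partial>lborel) +
       (\<integral>\<^sup>+t. ennreal (8 * M / \<alpha> / t) * indicator {\<alpha>..M*\<alpha>} t \<partial>lborel)"
      by (rule nn_integral_add[OF m3 m4])
    also have "(\<integral>\<^sup>+t. ennreal (8 * M / \<alpha>^2) * indicator {0..\<alpha>} t \<partial>lborel) = ennreal (8 * M / \<alpha>^2 * \<alpha>)"
      by (rule int_P1) (use a M in auto)
    also have "(\<integral>\<^sup>+t. ennreal (8 * M / \<alpha> / t) * indicator {\<alpha>..M*\<alpha>} t \<partial>lborel) = ennreal (8 * M / \<alpha> * ln M)"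
      by (rule int_P2) (use a M in auto)
    also have "(\<integral>\<^sup>+t. ennreal (M^2 / t^2) * indicator {M*\<alpha>..} t \<partial>lborel) = ennreal (M / \<alpha>)"
      by (rule int_P3[OF a M])
    finally show ?thesis .
  qed
  finally have I0: "(\<integral>\<^sup>+\<beta>. ennreal (f \<beta>) \<partial>lborel) \<le> (ennreal (8 * M / \<alpha>^2 * \<alpha>) + ennreal (8 * M / \<alpha> * ln M) + ennreal (M / \<alpha>))
     + (ennreal (8 * M / \<alpha>^2 * \<alpha>) + ennreal (8 * M / \<alpha> * ln M) + ennreal (M / \<alpha>))" .
  have e: "ennreal (8 * M / \<alpha>^2 * \<alpha>) + ennreal (8 * M / \<alpha> * ln M) + ennreal (M / \<alpha>)
      = ennreal (8 * M / \<alpha>^2 * \<alpha> + 8 * M / \<alpha> * ln M + M / \<alpha>)"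
    using a M by (subst ennreal_plus; simp)+
  have I: "(\<integral>\<^sup>+\<beta>. ennreal (f \<beta>) \<partial>lborel) \<le> 2 * ennreal (8 * M / \<alpha>^2 * \<alpha> + 8 * M / \<alpha> * ln M + M / \<alpha>)"
    using I0 unfolding e by (simp only: mult_2)
  have lnM: "ln M \<ge> 0" using M by simp
  have "ennreal \<alpha> * (\<integral>\<^sup>+\<beta>. ennreal (f \<beta>) \<partial>lborel) \<le> ennreal \<alpha> * (2 * ennreal (8 * M / \<alpha>^2 * \<alpha> + 8 * M / \<alpha> * ln M + M / \<alpha>))"
    by (rule mult_left_mono[OF I]) simp
  also have "\<dots> = ennreal (\<alpha> * (2 * (8 * M / \<alpha>^2 * \<alpha> + 8 * M / \<alpha> * ln M + M / \<alpha>)))"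
  proof -
    define X where "X = 8 * M / \<alpha>^2 * \<alpha> + 8 * M / \<alpha> * ln M + M / \<alpha>"
    have X: "X \<ge> 0" unfolding X_def using a M lnM by simp
    have "ennreal (\<alpha> * (2 * X)) = ennreal \<alpha> * ennreal (2 * X)"
      by (rule ennreal_mult) (use a X in auto)
    also have "ennreal (2 * X) = ennreal 2 * ennreal X"
      by (rule ennreal_mult) (use X in auto)
    finally show ?thesis unfolding X_def by simp
  qed
  also have "\<alpha> * (2 * (8 * M / \<alpha>^2 * \<alpha> + 8 * M / \<alpha> * ln M + M / \<alpha>)) = 16 * M * ln M + 18 * M"
    using a by (simp add: field_simps power2_eq_square)
  finally show ?thesis .
qed

context
  fixes J :: "'a::banach \<Rightarrow> 'a" and G :: "('a \<times> 'a) set"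
  assumes cs: "complex_structure J" and sect: "sect_half_pi J G"
begin

lemma M_ge1:
  assumes x: "x \<noteq> (0::'a)"
  shows "sect_const J G \<ge> 1"
proof (rule ccontr)
  let ?M = "sect_const J G"
  assume "\<not> ?M \<ge> 1"
  then have M1: "?M < 1" by simp
  define u where "u = res J G 1 x"
  obtain a where a: "(u, a) \<in> G" "x = cscale J 1 u + a"
    using res_mem[OF inv[OF cs sect, of 1]] unfolding u_def by auto
  have lin: "lin_op J G" using lin[OF cs sect] .
  have u0: "u \<noteq> 0"
  proof
    assume "u = 0"
    moreover have "(0, 0) \<in> G" using lin unfolding lin_op_def by blast
    ultimately have "a = 0" using a(1) lin unfolding lin_op_def by blast
    then show False using a(2) x \<open>u = 0\<close> by (simp add: cs_one)
  qed
  have key: "t * (1 - ?M) * norm u \<le> ?M * norm a" if t: "t > 0" for t :: real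
  proof -
    have "res J G (complex_of_real t) (cscale J (complex_of_real t) u + a) = u"
      by (rule res_eq[OF inv[OF cs sect] a(1)]) (use t in simp)
    then have "u = res J G (complex_of_real t) (t *\<^sub>R u + a)" by (simp add: cs_real)
    then have "norm u \<le> ?M / cmod (complex_of_real t) * norm (t *\<^sub>R u + a)"
      using Rbound[OF cs sect, of "complex_of_real t" "t *\<^sub>R u + a"] t by simp
    also have "\<dots> = ?M / t * norm (t *\<^sub>R u + a)" using t by simp
    also have "\<dots> \<le> ?M / t * (t * norm u + norm a)"
      by (rule mult_left_mono) (use norm_triangle_ineq[of "t *\<^sub>R u" a] t M_nonneg[OF cs sect] in auto)
    also have "\<dots> = ?M * norm u + ?M * norm a / t" using t by (simp add: field_simps)
    finally have "norm u - ?M * norm u \<le> ?M * norm a / t" by simp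
    then have "t * (norm u - ?M * norm u) \<le> ?M * norm a" using t by (simp add: field_simps)
    then show ?thesis by (simp add: algebra_simps)
  qed
  define D where "D = (1 - ?M) * norm u"
  define N where "N = ?M * norm a + 1"
  define t where "t = N / D"
  have den: "D > 0" unfolding D_def using M1 u0 by simp
  have Np: "N > 0" unfolding N_def using M_nonneg[OF cs sect] by (simp add: add_nonneg_pos)
  have tpos: "t > 0" unfolding t_def using den Np by simp
  have "t * D = N" unfolding t_def using den by simp
  then have "t * (1 - ?M) * norm u = ?M * norm a + 1" unfolding D_def N_def by (simp add: mult.assoc)
  then show False using key[OF tpos] by simp
qed

end

theorem lemma4p7:
  fixes J :: "'a::banach \<Rightarrow> 'a" and G :: "('a \<times> 'a) set" and \<alpha> :: real
  assumes "complex_structure J"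
    and "sect_half_pi J G"
    and "\<alpha> > 0"
  shows "ennreal \<alpha> * (\<integral>\<^sup>+ \<beta>. ennreal (norm (res J G (Complex \<alpha> \<beta>) o\<^sub>L res J G (Complex \<alpha> \<beta>))) \<partial>lborel)
     \<le> ennreal (4 * (2 * pi + 3 * ln 2) * sect_const J G * (ln (sect_const J G) + 1))"
proof -
  note cs = assms(1) and sect = assms(2) and a = assms(3)
  define M where "M = sect_const J G"
  define f where "f \<beta> = norm (res J G (Complex \<alpha> \<beta>) o\<^sub>L res J G (Complex \<alpha> \<beta>))" for \<beta>
  show ?thesis
  proof (cases "\<forall>x::'a. x = 0")
    case True
    have "f \<beta> = 0" for \<beta>
    proof -
      have "f \<beta> \<le> 0" unfolding f_def
        by (rule norm_blinfun_bound) (use True in auto)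
      then show ?thesis unfolding f_def by simp
    qed
    then show ?thesis unfolding f_def[symmetric] by simp
  next
    case False
    then obtain x :: 'a where "x \<noteq> 0" by blast
    then have M1: "M \<ge> 1" unfolding M_def by (rule M_ge1[OF cs sect])
    have Z: "Re (Complex \<alpha> \<beta>) = \<alpha>" "\<alpha> \<le> cmod (Complex \<alpha> \<beta>)" "\<bar>\<beta>\<bar> \<le> cmod (Complex \<alpha> \<beta>)" for \<beta>
      using complex_Re_le_cmod[of "Complex \<alpha> \<beta>"] abs_Im_le_cmod[of "Complex \<alpha> \<beta>"] by auto
    have n1: "f \<beta> \<le> 8 * M / (\<alpha> * cmod (Complex \<alpha> \<beta>))" for \<beta>
      unfolding f_def M_def using R2_norm1[OF cs sect, of "Complex \<alpha> \<beta>"] a by simp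
    have n2: "f \<beta> \<le> (M / cmod (Complex \<alpha> \<beta>))^2" for \<beta>
      unfolding f_def M_def using R2_norm2[OF cs sect, of "Complex \<alpha> \<beta>"] a by simp
    have "ennreal \<alpha> * (\<integral>\<^sup>+\<beta>. ennreal (f \<beta>) \<partial>lborel) \<le> ennreal (16 * M * ln M + 18 * M)"
    proof (rule key_integral[OF a M1])
      show "0 \<le> f \<beta>" for \<beta> unfolding f_def by simp
    next
      fix \<beta> :: real assume b: "\<bar>\<beta>\<bar> \<le> \<alpha>"
      have "8 * M / (\<alpha> * cmod (Complex \<alpha> \<beta>)) \<le> 8 * M / (\<alpha> * \<alpha>)"
        by (rule divide_left_mono) (use M1 a Z(2)[of \<beta>] in \<open>auto intro!: mult_left_mono mult_pos_pos\<close>)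
      then show "f \<beta> \<le> 8 * M / \<alpha>^2" using n1[of \<beta>] by (simp add: power2_eq_square)
    next
      fix \<beta> :: real assume b: "\<alpha> \<le> \<bar>\<beta>\<bar>" "\<bar>\<beta>\<bar> \<le> M * \<alpha>"
      have "8 * M / (\<alpha> * cmod (Complex \<alpha> \<beta>)) \<le> 8 * M / (\<alpha> * \<bar>\<beta>\<bar>)"
        by (rule divide_left_mono) (use M1 a b Z(3)[of \<beta>] in \<open>auto intro!: mult_left_mono mult_pos_pos\<close>)
      then show "f \<beta> \<le> 8 * M / \<alpha> / \<bar>\<beta>\<bar>" using n1[of \<beta>] by simp
    next
      fix \<beta> :: real assume b: "M * \<alpha> \<le> \<bar>\<beta>\<bar>"
      have bp: "\<bar>\<beta>\<bar> > 0" using b M1 a by (smt (verit) mult_pos_pos)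
      have cp: "cmod (Complex \<alpha> \<beta>) > 0" using bp Z(3)[of \<beta>] by linarith
      have "M / cmod (Complex \<alpha> \<beta>) \<le> M / \<bar>\<beta>\<bar>"
        by (rule divide_left_mono) (use M1 bp cp Z(3)[of \<beta>] in \<open>auto intro!: mult_pos_pos\<close>)
      then have "(M / cmod (Complex \<alpha> \<beta>))^2 \<le> (M / \<bar>\<beta>\<bar>)^2"
        by (rule power_mono) (use M1 in simp)
      then show "f \<beta> \<le> M^2 / \<beta>^2" using n2[of \<beta>] by (simp add: power_divide)
    qed
    also have "ennreal (16 * M * ln M + 18 * M) \<le> ennreal (4 * (2 * pi + 3 * ln 2) * M * (ln M + 1))"
    proof (rule ennreal_leI)
      define K where "K = 4 * (2 * pi + 3 * ln 2)"
      have l2: "ln (2::real) > 0" by simp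
      have p3: "3 < pi" by (rule pi_gt3)
      have "K = 8 * pi + 12 * ln 2" unfolding K_def by (simp add: algebra_simps)
      then have K: "K \<ge> 18" using p3 l2 by linarith
      have lnM: "ln M \<ge> 0" using M1 by simp
      have p1: "(K - 16) * (M * ln M) \<ge> 0" using K lnM M1 by simp
      have p2: "(K - 18) * M \<ge> 0" using K M1 by simp
      have "K * M * (ln M + 1) = K * (M * ln M) + K * M" by (simp add: algebra_simps)
      then have "16 * M * ln M + 18 * M \<le> K * M * (ln M + 1)" using p1 p2 by (simp add: algebra_simps)
      then show "16 * M * ln M + 18 * M \<le> 4 * (2 * pi + 3 * ln 2) * M * (ln M + 1)" unfolding K_def .
    qed
    finally show ?thesis unfolding f_def M_def .
  qed
qed

end
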